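(* For $\tau>0$, $$\mu_0(\tau;\tfrac14):=\int_{-\infty}^{\infty}\exp\left\{-\left(x^6-\tau x^4+\tfrac14\tau^2x^2\right)\right\}dx=\int_0^\infty s^{-1/2}\exp\left\{-s\left(s-\tfrac12\tau\right)^2\right\}ds$$ is given by $$\mu_0(\tau;\tfrac14)=\frac{\pi\sqrt{6\tau}}{9}\left\{I_{1/6}\!\left(\frac{\tau^3}{108}\right)+I_{-1/6}\!\left(\frac{\tau^3}{108}\right)\right\}\exp\left(-\frac{\tau^3}{108}\right).$$
   Context: $I_\nu(z)$ denotes the modified Bessel function of the first kind. *)

theory Defs
  imports "HOL-Analysis.Analysis"
begin

text \<open>Modified Bessel function of the first kind, for real order nu and real
  argument z > 0, via its defining power series
  I_nu(z) = sum_k (z/2)^(2k+nu) / (k! Gamma(k+nu+1)).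
  rGamma is the reciprocal Gamma function (zero at non-positive integers).\<close>
definition besselI :: "real \<Rightarrow> real \<Rightarrow> real" where
  "besselI \<nu> z = (\<Sum>k. (z / 2) powr (2 * real k + \<nu>) * rGamma (real k + \<nu> + 1) / fact k)"

end

theory Submission
  imports Defs "HOL-Real_Asymp.Real_Asymp"
begin

definition cc :: "nat \<Rightarrow> real" where
 "cc n = (if n mod 6 = 0 then 6 * rGamma (real (n div 6) + 5/6) / (216^(2*(n div 6)) * fact (n div 6))
          else if n mod 6 = 1 then rGamma (real (n div 6) + 7/6) / (216^(2*(n div 6)) * fact (n div 6)) else 0)"

lemma cc_aux0: "(F::real) > 0 \<Longrightarrow> P > 0 \<Longrightarrow> (k::real) \<ge> 0 \<Longrightarrow>
   6*((k+5/6)*R)/(P*F) / (1296*(6*k+5)*(6*k+6)) = 6*R/(46656*P*((k+1)*F))"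
  apply (simp add: divide_simps)
  apply (simp add: algebra_simps)
  done
lemma cc_aux1: "(F::real) > 0 \<Longrightarrow> P > 0 \<Longrightarrow> (k::real) \<ge> 0 \<Longrightarrow>
   ((k+7/6)*R)/(P*F) / (1296*(6*k+1+5)*(6*k+1+6)) = R/(46656*P*((k+1)*F))"
  apply (simp add: divide_simps)
  apply (simp add: algebra_simps)
  done
lemma cc_rec: "cc (n+6) = cc n / (1296 * (real n + 5) * (real n + 6))"
proof -
  define k where "k = n div 6"
  have d: "(n+6) div 6 = k + 1" "(n+6) mod 6 = n mod 6" unfolding k_def by auto
  have r1: "rGamma (real k + 5/6) = (real k + 5/6) * rGamma (real (k+1) + 5/6)"
    using rGamma_plus1[of "real k + 5/6"] by (simp add: add_ac)
  have r2: "rGamma (real k + 7/6) = (real k + 7/6) * rGamma (real (k+1) + 7/6)"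
    using rGamma_plus1[of "real k + 7/6"] by (simp add: add_ac)
  have p: "(216::real)^(2*(k+1)) = 46656 * 216^(2*k)" by (simp add: power_add power_mult)
  have f: "fact (k+1) = (real k + 1) * fact k" by (simp add: fact_Suc)
  have Fp: "(fact k :: real) > 0" "(216::real)^(2*k) > 0" by auto
  show ?thesis
  proof (cases "n mod 6 = 0")
    case True
    then have n: "real n = 6 * real k" unfolding k_def
      by (metis div_mult_mod_eq add_0_right of_nat_mult of_nat_numeral mult.commute)
    have "cc (n+6) = 6 * rGamma (real (k+1) + 5/6) / (216^(2*(k+1)) * fact (k+1))"
      using True d unfolding cc_def by simp
    moreover have "cc n = 6 * rGamma (real k + 5/6) / (216^(2*k) * fact k)"
      using True unfolding cc_def k_def by simp
    ultimately show ?thesis unfolding r1 p n f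
      using cc_aux0[OF Fp(1) Fp(2), of "real k" "rGamma (real (k+1) + 5/6)"]
      by (simp add: mult.assoc)
  next
    case F: False
    show ?thesis
    proof (cases "n mod 6 = 1")
      case True
      then have n: "real n = 6 * real k + 1" unfolding k_def
        by (metis div_mult_mod_eq of_nat_add of_nat_mult of_nat_numeral mult.commute of_nat_1)
      have "cc (n+6) = rGamma (real (k+1) + 7/6) / (216^(2*(k+1)) * fact (k+1))"
        using True d unfolding cc_def by simp
      moreover have "cc n = rGamma (real k + 7/6) / (216^(2*k) * fact k)"
        using True unfolding cc_def k_def by simp
      ultimately show ?thesis unfolding r2 p n f
        using cc_aux1[OF Fp(1) Fp(2), of "real k" "rGamma (real (k+1) + 7/6)"]
        by (simp add: mult.assoc)
    next
      case False
      then show ?thesis using F unfolding cc_def d by simp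
    qed
  qed
qed


lemma cc_ratio:
  fixes x :: real and j :: nat
  assumes j: "j < 6"
  shows "summable (\<lambda>k. cc (6*k+j) * x^(6*k+j))"
proof (rule summable_ratio_test[of "1/2" "nat \<lceil>x^6\<rceil>"])
  fix k assume k: "k \<ge> nat \<lceil>x^6\<rceil>"
  have kx: "real k \<ge> x^6" using k by linarith
  have e: "cc (6*Suc k+j) * x^(6*Suc k+j) = (cc (6*k+j) * x^(6*k+j)) * (x^6 / (1296 * (real (6*k+j) + 5) * (real (6*k+j) + 6)))"
    using cc_rec[of "6*k+j"] by (simp add: field_simps power_add mult_ac)
  have pos: "1296 * (real (6*k+j) + 5) * (real (6*k+j) + 6) > 0" by auto
  have "x^6 / (1296 * (real (6*k+j) + 5) * (real (6*k+j) + 6)) \<le> 1/2"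
  proof -
    have "2 * x^6 \<le> 2 * real k" using kx by simp
    also have "\<dots> \<le> 1296 * (real (6*k+j) + 5) * (real (6*k+j) + 6)"
      by (simp add: algebra_simps)
    finally show ?thesis using pos by (simp add: divide_simps)
  qed
  moreover have "x^6 / (1296 * (real (6*k+j) + 5) * (real (6*k+j) + 6)) \<ge> 0"
    using pos by (simp add: zero_le_even_power)
  ultimately show "norm (cc (6*Suc k+j) * x^(6*Suc k+j)) \<le> 1/2 * norm (cc (6*k+j) * x^(6*k+j))"
  proof -
    let ?q = "x^6 / (1296 * (real (6*k+j) + 5) * (real (6*k+j) + 6))"
    have "norm (cc (6*k+j) * x^(6*k+j) * ?q) = norm (cc (6*k+j) * x^(6*k+j)) * ?q"
      using \<open>?q \<ge> 0\<close> by (simp add: abs_mult)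
    also have "\<dots> \<le> norm (cc (6*k+j) * x^(6*k+j)) * (1/2)"
      by (rule mult_left_mono) (use \<open>?q \<le> 1/2\<close> in auto)
    finally show ?thesis unfolding e by simp
  qed
qed simp

definition S0 :: "real \<Rightarrow> real" where "S0 x = (\<Sum>k. cc (6*k) * x^(6*k))"
definition S1 :: "real \<Rightarrow> real" where "S1 x = (\<Sum>k. cc (6*k+1) * x^(6*k+1))"

lemma cc_sums: "(\<lambda>n. cc n * x^n) sums (S0 x + S1 x)"
proof -
  define h0 where "h0 n = (if n mod 6 = 0 then cc n * x^n else 0)" for n
  define h1 where "h1 n = (if n mod 6 = 1 then cc n * x^n else 0)" for n
  have s0: "(\<lambda>k. cc (6*k) * x^(6*k)) sums S0 x"
    using cc_ratio[of 0 x] unfolding S0_def by (simp add: summable_sums)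
  have s1: "(\<lambda>k. cc (6*k+1) * x^(6*k+1)) sums S1 x"
    using cc_ratio[of 1 x] unfolding S1_def by (simp add: summable_sums)
  have "(\<lambda>k. h0 (6*k)) sums S0 x" using s0 unfolding h0_def by simp
  then have a: "h0 sums S0 x"
  proof (subst (asm) sums_mono_reindex)
    show "strict_mono (\<lambda>k::nat. 6*k)" by (auto simp: strict_mono_def)
    fix n assume "n \<notin> range (\<lambda>k::nat. 6*k)"
    then show "h0 n = 0" unfolding h0_def
      by (metis (no_types, lifting) div_mult_mod_eq mult.commute rangeI add_0_right)
  qed
  have "(\<lambda>k. h1 (6*k+1)) sums S1 x" using s1 unfolding h1_def by simp
  then have b: "h1 sums S1 x"
  proof (subst (asm) sums_mono_reindex)
    show "strict_mono (\<lambda>k::nat. 6*k+1)" by (auto simp: strict_mono_def)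
    fix n assume "n \<notin> range (\<lambda>k::nat. 6*k+1)"
    then show "h1 n = 0" unfolding h1_def
      by (metis (no_types, lifting) div_mult_mod_eq mult.commute rangeI)
  qed
  have "(\<lambda>n. h0 n + h1 n) sums (S0 x + S1 x)" using sums_add[OF a b] .
  moreover have "(\<lambda>n. h0 n + h1 n) = (\<lambda>n. cc n * x^n)"
    by (auto simp: h0_def h1_def cc_def)
  ultimately show ?thesis by simp
qed

definition BB :: "real \<Rightarrow> real" where "BB x = (\<Sum>n. cc n * x^n)"

lemma BB_eq: "BB x = S0 x + S1 x" unfolding BB_def using cc_sums sums_unique by metis

lemma cc_summable: "summable (\<lambda>n. cc n * x^n)" using cc_sums sums_summable by blast


lemma diffs2_cc: "diffs (diffs cc) n = (if n \<ge> 4 then cc (n-4) / 1296 else 0)"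
proof (cases "n \<ge> 4")
  case True
  then obtain m where m: "n = m + 4" by (metis add.commute le_Suc_ex)
  have "cc (Suc (Suc n)) = cc (m+6)" using m by (simp add: numeral_eq_Suc)
  also have "\<dots> = cc m / (1296 * (real m + 5) * (real m + 6))" by (rule cc_rec)
  finally have e: "cc (Suc (Suc n)) = cc m / (1296 * (real m + 5) * (real m + 6))" .
  have pos: "1296 * (real m + 5) * (real m + 6) > 0" by auto
  have "diffs (diffs cc) n = (real m + 5) * ((real m + 6) * cc (Suc (Suc n)))"
    using m by (simp add: diffs_def algebra_simps)
  also have "\<dots> = cc m / 1296" unfolding e using pos by (simp add: field_simps)
  finally show ?thesis using True m by simp
next
  case False
  then have "n = 0 \<or> n = 1 \<or> n = 2 \<or> n = 3" by auto
  then show ?thesis using False by (auto simp: diffs_def cc_def)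
qed

lemma BB_deriv: "(BB has_real_derivative (\<Sum>n. diffs cc n * x^n)) (at x)"
  unfolding BB_def by (rule termdiffs_strong_converges_everywhere) (rule cc_summable)

lemma BB1_deriv: "((\<lambda>x. \<Sum>n. diffs cc n * x^n) has_real_derivative (\<Sum>n. diffs (diffs cc) n * x^n)) (at x)"
  by (rule termdiffs_strong_converges_everywhere) (rule termdiff_converges_all, rule cc_summable)

lemma BB2_eq: "(\<Sum>n. diffs (diffs cc) n * x^n) = x^4 / 1296 * BB x"
proof -
  define f where "f n = diffs (diffs cc) n * x^n" for n
  have "(\<lambda>n. cc n * x^n * (x^4/1296)) sums (BB x * (x^4/1296))"
    unfolding BB_def by (rule sums_mult2) (rule summable_sums[OF cc_summable])
  moreover have "(\<lambda>n. cc n * x^n * (x^4/1296)) = (\<lambda>n. f (n+4))"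
    by (auto simp: f_def diffs2_cc power_add field_simps)
  ultimately have "(\<lambda>n. f (n+4)) sums (BB x * (x^4/1296))" by simp
  then have "f sums (BB x * (x^4/1296) + (\<Sum>i<4. f i))" by (subst (asm) sums_iff_shift)
  moreover have "(\<Sum>i<4. f i) = 0" by (simp add: f_def diffs2_cc numeral_eq_Suc)
  ultimately show ?thesis unfolding f_def by (simp add: sums_iff mult.commute)
qed

lemma BB_0: "BB 0 = 6 * rGamma (5/6)"
  unfolding BB_def by (simp add: powser_zero cc_def)

lemma BB1_0: "(\<Sum>n. diffs cc n * 0^n) = rGamma (7/6)"
  by (simp add: powser_zero diffs_def cc_def)

lemma powr_sixth:
  fixes t :: real assumes t: "t > 0"
  shows "(t^3/216) powr (1/6) = sqrt (t/6)" "(t^3/216) powr (-1/6) = 1 / sqrt (t/6)"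
proof -
  have y: "t^3/216 = (t/6) powr 3"
  proof -
    have "(t/6) powr 3 = (t/6) ^ 3" using t powr_realpow[of "t/6" 3] by simp
    then show ?thesis by (simp add: power_divide)
  qed
  have a: "(t^3/216) powr (1/6) = (t/6) powr (1/2)"
    unfolding y powr_powr by simp
  show "(t^3/216) powr (1/6) = sqrt (t/6)" unfolding a using t by (simp add: powr_half_sqrt)
  have "(t^3/216) powr (-1/6) = 1 / (t^3/216) powr (1/6)"
    using powr_minus_divide[of "t^3/216" "1/6"] by simp
  then show "(t^3/216) powr (-1/6) = 1 / sqrt (t/6)" unfolding a using t by (simp add: powr_half_sqrt)
qed

lemma aux_S1: "(a::real)>0 \<Longrightarrow> b>0 \<Longrightarrow> P>0 \<Longrightarrow> F>0 \<Longrightarrow>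
   T/P * (a/b) * R / F = R/(P*F) * (T * a^2) / (a*b)"
  by (simp add: field_simps power2_eq_square)
lemma aux_S0: "(a::real)>0 \<Longrightarrow> b>0 \<Longrightarrow> P>0 \<Longrightarrow> F>0 \<Longrightarrow> b^2 = 6 \<Longrightarrow>
   T/P / (a/b) * R / F = 6*R/(P*F) * T / (a*b)"
  by (simp add: field_simps power2_eq_square)

lemma bessel_S1:
  fixes t :: real assumes t: "t > 0"
  shows "sqrt (6*t) * besselI (1/6) (t^3/108) = S1 t"
proof -
  have tm: "(t^3/108/2) powr (2 * real k + 1/6) * rGamma (real k + 1/6 + 1) / fact k
      = cc (6*k+1) * t^(6*k+1) / sqrt (6*t)" for k
  proof -
    have yp: "t^3/216 > 0" using t by simp
    have "(t^3/108/2) powr (2 * real k + 1/6) = (t^3/216) powr (real (2*k) + 1/6)" by simp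
    also have "\<dots> = (t^3/216) powr (real (2*k)) * (t^3/216) powr (1/6)" by (rule powr_add)
    also have "\<dots> = (t^3/216)^(2*k) * sqrt (t/6)" by (simp only: powr_realpow[OF yp] powr_sixth(1)[OF t])
    also have "\<dots> = t^(6*k) / 216^(2*k) * (sqrt t / sqrt 6)"
      by (simp add: power_divide power_mult[symmetric] mult.commute real_sqrt_divide)
    finally have 1: "(t^3/108/2) powr (2 * real k + 1/6) = t^(6*k) / 216^(2*k) * (sqrt t / sqrt 6)" .
    have d: "Suc (6*k) div 6 = k" "Suc (6*k) mod 6 = 1" by presburger+
    have 2: "cc (6*k+1) = rGamma (real k + 7/6) / (216^(2*k) * fact k)"
      unfolding cc_def using d by simp
    have 3: "real k + 1/6 + 1 = real k + 7/6" by simp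
    have 4: "sqrt (6*t) = sqrt t * sqrt 6" by (simp add: real_sqrt_mult)
    have 5: "t^(6*k+1) = t^(6*k) * (sqrt t)^2" using t by simp
    show ?thesis unfolding 1 2 3 4 5
      by (rule aux_S1) (use t in auto)
  qed
  have "besselI (1/6) (t^3/108) = (\<Sum>k. cc (6*k+1) * t^(6*k+1) / sqrt (6*t))"
    unfolding besselI_def tm ..
  also have "\<dots> = S1 t / sqrt (6*t)" unfolding S1_def
    using suminf_divide[OF cc_ratio[of 1 t], of "sqrt (6*t)"] by simp
  finally show ?thesis using t by simp
qed

lemma bessel_S0:
  fixes t :: real assumes t: "t > 0"
  shows "sqrt (6*t) * besselI (-1/6) (t^3/108) = S0 t"
proof -
  have tm: "(t^3/108/2) powr (2 * real k + -1/6) * rGamma (real k + -1/6 + 1) / fact k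
      = cc (6*k) * t^(6*k) / sqrt (6*t)" for k
  proof -
    have yp: "t^3/216 > 0" using t by simp
    have "(t^3/108/2) powr (2 * real k + -1/6) = (t^3/216) powr (real (2*k) + -1/6)" by simp
    also have "\<dots> = (t^3/216) powr (real (2*k)) * (t^3/216) powr (-1/6)" by (rule powr_add)
    also have "\<dots> = (t^3/216)^(2*k) * (1 / sqrt (t/6))" by (simp only: powr_realpow[OF yp] powr_sixth(2)[OF t])
    also have "\<dots> = t^(6*k) / 216^(2*k) / (sqrt t / sqrt 6)"
      by (simp add: power_divide power_mult[symmetric] mult.commute real_sqrt_divide)
    finally have 1: "(t^3/108/2) powr (2 * real k + -1/6) = t^(6*k) / 216^(2*k) / (sqrt t / sqrt 6)" .
    have d: "(6*k) div 6 = k" "(6*k) mod 6 = 0" by presburger+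
    have 2: "cc (6*k) = 6 * rGamma (real k + 5/6) / (216^(2*k) * fact k)"
      unfolding cc_def using d by simp
    have 3: "real k + -1/6 + 1 = real k + 5/6" by simp
    have 4: "sqrt (6*t) = sqrt t * sqrt 6" by (simp add: real_sqrt_mult)
    show ?thesis unfolding 1 2 3 4
      by (rule aux_S0) (use t in auto)
  qed
  have "besselI (-1/6) (t^3/108) = (\<Sum>k. cc (6*k) * t^(6*k) / sqrt (6*t))"
    unfolding besselI_def tm ..
  also have "\<dots> = S0 t / sqrt (6*t)" unfolding S0_def
    using suminf_divide[OF cc_ratio[of 0 t], of "sqrt (6*t)"] by simp
  finally show ?thesis using t by simp
qed

lemma mvt_bound:
  fixes f f' :: "real \<Rightarrow> real"
  assumes der: "\<And>t. (f has_real_derivative f' t) (at t)"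
    and bnd: "\<And>t. \<bar>t - t0\<bar> \<le> \<bar>h\<bar> \<Longrightarrow> \<bar>f' t\<bar> \<le> B"
    and h: "h \<noteq> 0"
  shows "\<bar>(f (t0 + h) - f t0) / h\<bar> \<le> B"
proof (cases "h > 0")
  case True
  obtain z where z: "t0 < z" "z < t0 + h" "f (t0+h) - f t0 = (t0 + h - t0) * f' z"
    using MVT2[of t0 "t0+h" f f'] True der by auto
  have "\<bar>z - t0\<bar> \<le> \<bar>h\<bar>" using z True by auto
  then show ?thesis using z(3) bnd True by (simp add: abs_mult)
next
  case False
  then have hn: "h < 0" using h by simp
  obtain z where z: "t0 + h < z" "z < t0" "f t0 - f (t0+h) = (t0 - (t0 + h)) * f' z"
    using MVT2[of "t0+h" t0 f f'] hn der by auto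
  have "\<bar>z - t0\<bar> \<le> \<bar>h\<bar>" using z hn by auto
  moreover have "(f (t0 + h) - f t0) / h = f' z" using z(3) hn by (simp add: field_simps)
  ultimately show ?thesis using bnd by simp
qed

lemma DERIV_integral_UNIV:
  fixes f f' :: "real \<Rightarrow> real \<Rightarrow> real" and G :: "real \<Rightarrow> real"
  assumes der: "\<And>t x. ((\<lambda>t. f t x) has_real_derivative f' t x) (at t)"
    and fint: "\<And>t. f t integrable_on UNIV"
    and Gint: "G integrable_on UNIV"
    and bnd: "\<And>t x. \<bar>t - t0\<bar> \<le> 1 \<Longrightarrow> \<bar>f' t x\<bar> \<le> G x"
  shows "((\<lambda>t. integral UNIV (f t)) has_real_derivative integral UNIV (f' t0)) (at t0)"
  unfolding DERIV_def
proof (subst tendsto_at_iff_sequentially, intro allI impI)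
  fix X :: "nat \<Rightarrow> real"
  assume X0: "\<forall>i. X i \<in> UNIV - {0}" and Xl: "X \<longlonglongrightarrow> 0"
  from Xl have "eventually (\<lambda>i. norm (X i) < 1) sequentially"
    using order_tendstoD(2)[OF tendsto_norm[OF Xl], of 1] by simp
  then obtain N where N: "\<And>i. i \<ge> N \<Longrightarrow> \<bar>X i\<bar> < 1"
    by (auto simp: eventually_sequentially)
  define Y where "Y i = X (i + N)" for i
  have Y0: "Y i \<noteq> 0" for i using X0 by (auto simp: Y_def)
  have Y1: "\<bar>Y i\<bar> \<le> 1" for i using N[of "i+N"] by (auto simp: Y_def)
  have Yl: "Y \<longlonglongrightarrow> 0" unfolding Y_def using Xl by (rule LIMSEQ_ignore_initial_segment[where k=N, simplified])
  define q where "q i x = (f (t0 + Y i) x - f t0 x) / Y i" for i x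
  have qint: "q i integrable_on UNIV" for i
    unfolding q_def by (intro integrable_on_divide integrable_diff fint)
  have qb: "norm (q i x) \<le> G x" for i x
    unfolding q_def real_norm_def
  proof (rule mvt_bound[where f' = "\<lambda>t. f' t x"])
    fix t assume "\<bar>t - t0\<bar> \<le> \<bar>Y i\<bar>"
    then have "\<bar>t - t0\<bar> \<le> 1" using Y1[of i] by linarith
    then show "\<bar>f' t x\<bar> \<le> G x" by (rule bnd)
  qed (use der Y0 in auto)
  have ql: "(\<lambda>i. q i x) \<longlonglongrightarrow> f' t0 x" for x
  proof -
    have "((\<lambda>h. (f (t0 + h) x - f t0 x) / h) \<longlongrightarrow> f' t0 x) (at 0)"
      using der[of x t0] unfolding DERIV_def .
    then show ?thesis unfolding q_def
      using Y0 Yl by (subst (asm) tendsto_at_iff_sequentially) (auto simp: o_def)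
  qed
  have "(\<lambda>i. integral UNIV (q i)) \<longlonglongrightarrow> integral UNIV (f' t0)"
    by (rule dominated_convergence(2)[OF qint Gint]) (use qb ql in auto)
  moreover have "integral UNIV (q i) = (integral UNIV (f (t0 + Y i)) - integral UNIV (f t0)) / Y i" for i
    unfolding q_def by (simp add: integral_diff fint)
  ultimately have "(\<lambda>i. (integral UNIV (f (t0 + X (i + N))) - integral UNIV (f t0)) / X (i + N)) \<longlonglongrightarrow> integral UNIV (f' t0)"
    by (simp add: Y_def)
  then show "((\<lambda>h. (integral UNIV (f (t0 + h)) - integral UNIV (f t0)) / h) \<circ> X) \<longlonglongrightarrow> integral UNIV (f' t0)"
    unfolding o_def by (rule LIMSEQ_offset)
qed


lemma integral_deriv_UNIV_zero:
  fixes K K' :: "real \<Rightarrow> real"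
  assumes der: "\<And>x. (K has_real_derivative K' x) (at x)"
    and int: "K' absolutely_integrable_on UNIV"
    and top: "(K \<longlongrightarrow> 0) at_top" and bot: "(K \<longlongrightarrow> 0) at_bot"
  shows "integral UNIV K' = 0"
proof -
  define q where "q n x = (if x \<in> {-real n..real n} then K' x else 0)" for n x
  have Kn: "(K' has_integral (K (real n) - K (- real n))) {-real n..real n}" for n
    by (rule fundamental_theorem_of_calculus)
       (auto intro!: has_vector_derivative_at_within simp: has_real_derivative_iff_has_vector_derivative[symmetric] der has_field_derivative_at_within)
  have qi: "integral UNIV (q n) = K (real n) - K (- real n)" for n
    unfolding q_def integral_restrict_UNIV using Kn by (rule integral_unique)
  have qint: "q n integrable_on UNIV" for n
    unfolding q_def integrable_restrict_UNIV using Kn by blast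
  have nint: "(\<lambda>x. norm (K' x)) integrable_on UNIV"
    using int absolutely_integrable_on_def by blast
  have ql: "(\<lambda>n. q n x) \<longlonglongrightarrow> K' x" for x
  proof -
    have "eventually (\<lambda>n. real n \<ge> \<bar>x\<bar>) sequentially"
      using filterlim_real_sequentially unfolding filterlim_at_top by auto
    then have "eventually (\<lambda>n. K' x = q n x) sequentially"
      by eventually_elim (auto simp: q_def)
    then show ?thesis by (rule Lim_transform_eventually[OF tendsto_const])
  qed
  have "(\<lambda>n. integral UNIV (q n)) \<longlonglongrightarrow> integral UNIV K'"
    by (rule dominated_convergence(2)[OF qint nint]) (use ql in \<open>auto simp: q_def\<close>)
  moreover have "(\<lambda>n. K (real n) - K (- real n)) \<longlonglongrightarrow> 0 - 0"
  proof (intro tendsto_diff)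
    show "(\<lambda>n. K (real n)) \<longlonglongrightarrow> 0"
      using filterlim_compose[OF top filterlim_real_sequentially] by simp
    have "filterlim (\<lambda>n. - real n) at_bot sequentially"
      using filterlim_real_sequentially filterlim_uminus_at_top by auto
    then show "(\<lambda>n. K (- real n)) \<longlonglongrightarrow> 0"
      using filterlim_compose[OF bot] by blast
  qed
  ultimately show ?thesis unfolding qi using LIMSEQ_unique by fastforce
qed

lemma exp_abs_integrable: "(\<lambda>x::real. exp (- \<bar>x\<bar>)) absolutely_integrable_on UNIV"
proof -
  have a: "(\<lambda>x::real. exp (- \<bar>x\<bar>)) integrable_on {0..}"
  proof -
    have "(\<lambda>x::real. exp (- 1 * x)) integrable_on {0..}" by (rule integrable_on_exp_minus_to_infinity) simp
    then show ?thesis by (rule integrable_spike_finite[of "{}", rotated 2]) auto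
  qed
  have b: "(\<lambda>x::real. exp (- \<bar>x\<bar>)) integrable_on {..0}"
  proof -
    have ai: "(\<lambda>x::real. exp (- \<bar>x\<bar>)) absolutely_integrable_on {0..}"
      by (rule nonnegative_absolutely_integrable_1[OF a]) auto
    have "(\<lambda>x::real. exp (- \<bar>-x\<bar>)) absolutely_integrable_on {..0}"
      using has_absolute_integral_reflect_real[of "{..0}" "{0..}" "\<lambda>x::real. exp (- \<bar>x\<bar>)"
         "integral {0..} (\<lambda>x::real. exp (- \<bar>x\<bar>))"] ai by auto
    then show ?thesis using absolutely_integrable_on_def by auto
  qed
  have "(\<lambda>x::real. exp (- \<bar>x\<bar>)) integrable_on UNIV"
  proof (rule integrable_Un'[OF b a])
    have "{..0} \<inter> {0..} = {0::real}" by auto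
    then show "negligible ({..0} \<inter> {0::real..})" by simp
  qed auto
  then show ?thesis by (rule nonnegative_absolutely_integrable_1) auto
qed

lemma bounded_from_limits:
  fixes h :: "real \<Rightarrow> real"
  assumes c: "continuous_on UNIV h" and top: "(h \<longlongrightarrow> 0) at_top" and bot: "(h \<longlongrightarrow> 0) at_bot"
  shows "\<exists>M. \<forall>x. \<bar>h x\<bar> \<le> M"
proof -
  have "eventually (\<lambda>x. \<bar>h x\<bar> < 1) at_top"
    using order_tendstoD(2)[OF tendsto_rabs[OF top], of 1] by simp
  then obtain A where A: "\<And>x. x \<ge> A \<Longrightarrow> \<bar>h x\<bar> < 1" by (auto simp: eventually_at_top_linorder)
  have "eventually (\<lambda>x. \<bar>h x\<bar> < 1) at_bot"
    using order_tendstoD(2)[OF tendsto_rabs[OF bot], of 1] by simp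
  then obtain B where B: "\<And>x. x \<le> B \<Longrightarrow> \<bar>h x\<bar> < 1" by (auto simp: eventually_at_bot_linorder)
  have "compact (h ` {B..A})"
    by (rule compact_continuous_image) (use c continuous_on_subset in auto)
  then obtain M where M: "\<And>y. y \<in> h ` {B..A} \<Longrightarrow> norm y \<le> M"
    using compact_imp_bounded bounded_iff by metis
  show ?thesis
  proof (intro exI allI)
    fix x
    show "\<bar>h x\<bar> \<le> max M 1"
      using A[of x] B[of x] M[of "h x"] by (cases "x \<ge> A"; cases "x \<le> B") auto
  qed
qed


lemma even_has_integral:
  fixes h :: "real \<Rightarrow> real"
  assumes ev: "\<And>x. h (-x) = h x" and nn: "\<And>x. h x \<ge> 0" and hi: "(h has_integral I) {0<..}"
  shows "(h has_integral (2*I)) UNIV"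
proof -
  have ai: "h absolutely_integrable_on {0<..}"
    using hi nonnegative_absolutely_integrable_1 nn by blast
  have "(\<lambda>x. h (-x)) absolutely_integrable_on {..<0} \<and> integral {..<0} (\<lambda>x. h (-x)) = I"
    using has_absolute_integral_reflect_real[of "{..<0}" "{0<..}" h I] ai hi
    by (auto simp: integral_unique)
  then have "h absolutely_integrable_on {..<0} \<and> integral {..<0} h = I" using ev by simp
  then have l: "(h has_integral I) {..<0}"
    using absolutely_integrable_on_def has_integral_iff by blast
  have "(h has_integral (I + I)) ({..<0} \<union> {0<..})"
  proof (rule has_integral_Un[OF l hi])
    have "{..<0} \<inter> {0<..} = ({}::real set)" by auto
    then show "negligible ({..<0} \<inter> {0::real<..})" by simp
  qed
  moreover have "({..<0} \<union> {0<..}) = UNIV - {0::real}" by auto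
  ultimately have "(h has_integral (2*I)) (UNIV - {0})" by simp
  then show ?thesis
    by (rule has_integral_spike_set_eq[THEN iffD1, rotated 2]) (auto intro: negligible_subset[of "{0}"])
qed

lemma even_has_integral_half:
  fixes h :: "real \<Rightarrow> real"
  assumes ev: "\<And>x. h (-x) = h x" and nn: "\<And>x. h x \<ge> 0" and hi: "(h has_integral J) UNIV"
  shows "(h has_integral (J/2)) {0<..}"
proof -
  have "h absolutely_integrable_on UNIV"
    using hi nonnegative_absolutely_integrable_1 nn by blast
  then have "h absolutely_integrable_on {0<..}"
    by (rule set_integrable_subset) auto
  then have "(h has_integral (integral {0<..} h)) {0<..}"
    using absolutely_integrable_on_def has_integral_iff by blast
  moreover from even_has_integral[OF ev nn this] hi have "J = 2 * integral {0<..} h"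
    using has_integral_unique by blast
  ultimately show ?thesis by simp
qed

definition ff :: "real \<Rightarrow> real \<Rightarrow> real" where "ff t x = exp (- (x^6 - t*x^4 + t^2*x^2/4 - t^3/108))"
definition pp :: "real \<Rightarrow> real \<Rightarrow> real" where "pp t x = x^4 - t*x^2/2 + t^2/36"
definition gg1 :: "real \<Rightarrow> real \<Rightarrow> real" where "gg1 t x = pp t x * ff t x"
definition gg2 :: "real \<Rightarrow> real \<Rightarrow> real" where "gg2 t x = (pp t x ^ 2 - x^2/2 + t/18) * ff t x"
definition KK :: "real \<Rightarrow> real \<Rightarrow> real" where "KK t x = x*(t - 3*x^2)/18 * ff t x"
definition HH :: "real \<Rightarrow> real \<Rightarrow> real" where
  "HH T x = (1 + x^2/2 + T/18 + (x^4 + T*x^2/2 + T^2/36)^2) * exp (- (x^6) + T*x^4 + T^3)"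

lemma ff_deriv: "((\<lambda>t. ff t x) has_real_derivative gg1 t x) (at t)"
  unfolding ff_def gg1_def pp_def
  by (rule derivative_eq_intros refl | simp)+

lemma pp_deriv: "((\<lambda>t. pp t x) has_real_derivative (t/18 - x^2/2)) (at t)"
  unfolding pp_def
  by (rule derivative_eq_intros refl | simp)+

lemma gg1_deriv: "((\<lambda>t. gg1 t x) has_real_derivative gg2 t x) (at t)"
proof -
  have "((\<lambda>t. pp t x * ff t x) has_real_derivative ((t/18 - x^2/2) * ff t x + gg1 t x * pp t x)) (at t)"
    by (rule DERIV_mult[OF pp_deriv ff_deriv])
  moreover have "(t/18 - x^2/2) * ff t x + gg1 t x * pp t x = gg2 t x"
    unfolding gg1_def gg2_def by (simp add: algebra_simps power2_eq_square)
  ultimately show ?thesis unfolding gg1_def by simp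
qed

lemma ff_xderiv: "((\<lambda>x. ff t x) has_real_derivative (ff t x * (- (6*x^5 - 4*t*x^3 + t^2*x/2)))) (at x)"
proof -
  have "((\<lambda>x. - (x^6 - t*x^4 + t^2*x^2/4 - t^3/108)) has_real_derivative (- (6*x^5 - 4*t*x^3 + t^2*x/2))) (at x)"
    by (auto intro!: derivative_eq_intros simp: algebra_simps)
  from DERIV_fun_exp[OF this] show ?thesis unfolding ff_def .
qed

lemma KK_deriv: "((\<lambda>x. KK t x) has_real_derivative (gg2 t x - t^4/1296 * ff t x)) (at x)"
proof -
  have p: "((\<lambda>x. x*(t - 3*x^2)/18) has_real_derivative ((t - 9*x^2)/18)) (at x)"
    by (auto intro!: derivative_eq_intros simp: field_simps power2_eq_square)
  have "((\<lambda>x. x*(t - 3*x^2)/18 * ff t x) has_real_derivative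
     ((t - 9*x^2)/18 * ff t x + (ff t x * (- (6*x^5 - 4*t*x^3 + t^2*x/2))) * (x*(t - 3*x^2)/18))) (at x)"
    by (rule DERIV_mult[OF p ff_xderiv])
  moreover have "(t - 9*x^2)/18 * ff t x + (ff t x * (- (6*x^5 - 4*t*x^3 + t^2*x/2))) * (x*(t - 3*x^2)/18)
      = gg2 t x - t^4/1296 * ff t x"
    unfolding gg2_def pp_def by (simp add: field_simps eval_nat_numeral)
  ultimately show ?thesis unfolding KK_def by simp
qed


lemma HH_nonneg: "T \<ge> 0 \<Longrightarrow> HH T x \<ge> 0"
  unfolding HH_def by (intro mult_nonneg_nonneg) (auto intro!: add_nonneg_nonneg)

lemma exp_part_bound:
  assumes "\<bar>t\<bar> \<le> T"
  shows "ff t x \<le> exp (- (x^6) + T*x^4 + T^3)"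
proof -
  have x4: "x^4 \<ge> 0" by (simp add: zero_le_even_power)
  have a: "t * x^4 \<le> T * x^4" using assms x4 by (intro mult_right_mono) auto
  have b: "t^2*x^2/4 \<ge> 0" by simp
  have "t^3 \<le> \<bar>t\<bar>^3" by (metis abs_ge_self power_abs abs_ge_self)
  also have "\<bar>t\<bar>^3 \<le> T^3" using assms by (intro power_mono) auto
  finally have c0: "t^3 \<le> T^3" .
  have T3: "T^3 \<ge> 0" using assms by simp
  have c: "t^3/108 \<le> T^3" using c0 T3 by (cases "t^3 \<ge> 0") linarith+
  have "- (x^6 - t*x^4 + t^2*x^2/4 - t^3/108) \<le> - (x^6) + T*x^4 + T^3" using a b c by linarith
  then show ?thesis unfolding ff_def by simp
qed

lemma pp_bound:
  assumes "\<bar>t\<bar> \<le> T"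
  shows "\<bar>pp t x\<bar> \<le> x^4 + T*x^2/2 + T^2/36"
proof -
  have x2: "x^2 \<ge> 0" by simp
  have a: "\<bar>t*x^2/2\<bar> \<le> T*x^2/2" using assms x2 by (simp add: abs_mult mult_right_mono)
  have b: "t^2 \<le> T^2" using assms by (metis abs_ge_zero power2_abs power_mono)
  have c: "x^4 \<ge> 0" "t^2 \<ge> 0" by (simp_all add: zero_le_even_power)
  from a have a1: "t*x^2/2 \<le> T*x^2/2" "- (t*x^2/2) \<le> T*x^2/2" unfolding abs_le_iff by auto
  show ?thesis unfolding pp_def abs_le_iff using a1 b c by (intro conjI) linarith+
qed

lemma dom_bounds:
  assumes "\<bar>t\<bar> \<le> T"
  shows "\<bar>ff t x\<bar> \<le> HH T x" "\<bar>gg1 t x\<bar> \<le> HH T x" "\<bar>gg2 t x\<bar> \<le> HH T x"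
proof -
  define P where "P = x^4 + T*x^2/2 + T^2/36"
  define Q where "Q = 1 + x^2/2 + T/18 + P^2"
  have T0: "T \<ge> 0" using assms by linarith
  have E: "0 \<le> ff t x" "ff t x \<le> exp (- (x^6) + T*x^4 + T^3)"
    using exp_part_bound[OF assms] by (auto simp: ff_def)
  have H: "HH T x = Q * exp (- (x^6) + T*x^4 + T^3)" unfolding HH_def Q_def P_def by simp
  have pb: "\<bar>pp t x\<bar> \<le> P" unfolding P_def by (rule pp_bound[OF assms])
  have P0: "P \<ge> 0" using pb by linarith
  have Q1: "Q \<ge> 1" unfolding Q_def using T0 by simp
  have QP: "P \<le> Q"
  proof -
    have "0 \<le> (P - 1)^2" by simp
    then have "2*P \<le> 1 + P^2" by (simp add: power2_diff)
    moreover have "x^2/2 \<ge> 0" "T/18 \<ge> 0" using T0 by auto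
    ultimately show ?thesis unfolding Q_def using P0 by linarith
  qed
  have pp2: "pp t x ^2 \<le> P^2" using pb by (metis abs_ge_zero power2_abs power_mono)
  have Q2: "\<bar>pp t x ^ 2 - x^2/2 + t/18\<bar> \<le> Q"
  proof -
    have "pp t x ^ 2 \<ge> 0" "x^2 \<ge> 0" by simp_all
    then show ?thesis unfolding Q_def abs_le_iff using pp2 assms T0 by (intro conjI) linarith+
  qed
  have "\<bar>ff t x\<bar> = 1 * ff t x" using E by simp
  also have "\<dots> \<le> Q * exp (- (x^6) + T*x^4 + T^3)" using E Q1 by (intro mult_mono) auto
  finally show "\<bar>ff t x\<bar> \<le> HH T x" unfolding H .
  have "\<bar>gg1 t x\<bar> = \<bar>pp t x\<bar> * ff t x" unfolding gg1_def using E by (simp add: abs_mult)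
  also have "\<dots> \<le> Q * exp (- (x^6) + T*x^4 + T^3)" using E pb QP by (intro mult_mono) auto
  finally show "\<bar>gg1 t x\<bar> \<le> HH T x" unfolding H .
  have "\<bar>gg2 t x\<bar> = \<bar>pp t x ^ 2 - x^2/2 + t/18\<bar> * ff t x" unfolding gg2_def using E by (simp add: abs_mult)
  also have "\<dots> \<le> Q * exp (- (x^6) + T*x^4 + T^3)" using E Q2 by (intro mult_mono) auto
  finally show "\<bar>gg2 t x\<bar> \<le> HH T x" unfolding H .
qed

lemma HH_integrable:
  assumes T: "T \<ge> 0"
  shows "HH T absolutely_integrable_on UNIV"
proof -
  define h where "h x = HH T x * exp \<bar>x\<bar>" for x
  have hc: "continuous_on UNIV h" unfolding h_def HH_def by (intro continuous_intros) auto
  have htop: "(h \<longlongrightarrow> 0) at_top"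
  proof -
    have "((\<lambda>x::real. (1 + x^2/2 + T/18 + (x^4 + T*x^2/2 + T^2/36)^2) * exp (- (x^6) + T*x^4 + T^3) * exp x) \<longlongrightarrow> 0) at_top"
      by real_asymp
    moreover have "eventually (\<lambda>x. (1 + x^2/2 + T/18 + (x^4 + T*x^2/2 + T^2/36)^2) * exp (- (x^6) + T*x^4 + T^3) * exp x = h x) at_top"
      using eventually_ge_at_top[of 0] by eventually_elim (simp add: h_def HH_def)
    ultimately show ?thesis by (rule Lim_transform_eventually)
  qed
  have hev: "h (-x) = h x" for x unfolding h_def HH_def by simp
  have hbot: "(h \<longlongrightarrow> 0) at_bot"
    unfolding filterlim_at_bot_mirror hev using htop .
  obtain M where M: "\<And>x. \<bar>h x\<bar> \<le> M" using bounded_from_limits[OF hc htop hbot] by blast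
  have le: "norm (HH T x) \<le> M * exp (- \<bar>x\<bar>)" for x
  proof -
    have "HH T x = h x * exp (- \<bar>x\<bar>)" unfolding h_def by (simp add: exp_minus field_simps)
    then have "\<bar>HH T x\<bar> = \<bar>h x\<bar> * exp (- \<bar>x\<bar>)" by (simp add: abs_mult)
    also have "\<dots> \<le> M * exp (- \<bar>x\<bar>)" using M[of x] by (intro mult_right_mono) auto
    finally show ?thesis by simp
  qed
  have e: "(\<lambda>x::real. exp (- \<bar>x\<bar>)) integrable_on UNIV"
    using exp_abs_integrable absolutely_integrable_on_def by blast
  have gi: "(\<lambda>x. M * exp (- \<bar>x\<bar>)) integrable_on UNIV"
    using integrable_on_mult_left[OF e, of M] by (simp add: mult.commute)
  have meas: "HH T \<in> borel_measurable (lebesgue_on UNIV)"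
    by (rule continuous_imp_measurable_on_sets_lebesgue) (auto simp: HH_def intro!: continuous_intros)
  show ?thesis
    by (rule measurable_bounded_by_integrable_imp_absolutely_integrable[OF meas _ gi]) (use le in auto)
qed

lemma dominated_integrable:
  fixes g :: "real \<Rightarrow> real"
  assumes "continuous_on UNIV g" "T \<ge> 0" "\<And>x. \<bar>g x\<bar> \<le> HH T x"
  shows "g absolutely_integrable_on UNIV"
proof -
  have "HH T integrable_on UNIV" using HH_integrable[OF assms(2)] absolutely_integrable_on_def by blast
  moreover have meas: "g \<in> borel_measurable (lebesgue_on UNIV)"
    by (rule continuous_imp_measurable_on_sets_lebesgue) (use assms in auto)
  ultimately show ?thesis
    using measurable_bounded_by_integrable_imp_absolutely_integrable[OF meas, of "HH T"] assms(3) by auto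
qed

lemma ff_cont: "continuous_on UNIV (ff t)" unfolding ff_def by (intro continuous_intros) auto
lemma gg1_cont: "continuous_on UNIV (gg1 t)" unfolding gg1_def pp_def ff_def by (intro continuous_intros) auto
lemma gg2_cont: "continuous_on UNIV (gg2 t)" unfolding gg2_def pp_def ff_def by (intro continuous_intros) auto

lemma ff_int: "ff t absolutely_integrable_on UNIV"
  by (rule dominated_integrable[OF ff_cont, of "\<bar>t\<bar>"]) (auto intro: dom_bounds)
lemma gg1_int: "gg1 t absolutely_integrable_on UNIV"
  by (rule dominated_integrable[OF gg1_cont, of "\<bar>t\<bar>"]) (auto intro: dom_bounds)
lemma gg2_int: "gg2 t absolutely_integrable_on UNIV"
  by (rule dominated_integrable[OF gg2_cont, of "\<bar>t\<bar>"]) (auto intro: dom_bounds)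

lemma HH_int': "T \<ge> 0 \<Longrightarrow> HH T integrable_on UNIV"
  using HH_integrable absolutely_integrable_on_def by blast

lemma E_deriv: "((\<lambda>t. integral UNIV (ff t)) has_real_derivative integral UNIV (gg1 t0)) (at t0)"
proof (rule DERIV_integral_UNIV[where G = "HH (\<bar>t0\<bar> + 1)"])
  show "((\<lambda>t. ff t x) has_real_derivative gg1 t x) (at t)" for t x by (rule ff_deriv)
  show "ff t integrable_on UNIV" for t using ff_int absolutely_integrable_on_def by blast
  show "HH (\<bar>t0\<bar> + 1) integrable_on UNIV" by (rule HH_int') simp
  show "\<bar>gg1 t x\<bar> \<le> HH (\<bar>t0\<bar> + 1) x" if "\<bar>t - t0\<bar> \<le> 1" for t x
    by (rule dom_bounds) (use that in linarith)
qed

lemma E1_deriv: "((\<lambda>t. integral UNIV (gg1 t)) has_real_derivative integral UNIV (gg2 t0)) (at t0)"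
proof (rule DERIV_integral_UNIV[where G = "HH (\<bar>t0\<bar> + 1)"])
  show "((\<lambda>t. gg1 t x) has_real_derivative gg2 t x) (at t)" for t x by (rule gg1_deriv)
  show "gg1 t integrable_on UNIV" for t using gg1_int absolutely_integrable_on_def by blast
  show "HH (\<bar>t0\<bar> + 1) integrable_on UNIV" by (rule HH_int') simp
  show "\<bar>gg2 t x\<bar> \<le> HH (\<bar>t0\<bar> + 1) x" if "\<bar>t - t0\<bar> \<le> 1" for t x
    by (rule dom_bounds) (use that in linarith)
qed

lemma KK_top: "(KK t \<longlongrightarrow> 0) at_top"
  unfolding KK_def ff_def by real_asymp
lemma KK_bot: "(KK t \<longlongrightarrow> 0) at_bot"
  unfolding KK_def ff_def by real_asymp

lemma E2_eq: "integral UNIV (gg2 t) = t^4/1296 * integral UNIV (ff t)"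
proof -
  have ai: "(\<lambda>x. gg2 t x - t^4/1296 * ff t x) absolutely_integrable_on UNIV"
    by (intro set_integral_diff(1) gg2_int set_integrable_mult_right ff_int)
  have "integral UNIV (\<lambda>x. gg2 t x - t^4/1296 * ff t x) = 0"
    by (rule integral_deriv_UNIV_zero[OF KK_deriv ai KK_top KK_bot])
  moreover have "integral UNIV (\<lambda>x. gg2 t x - t^4/1296 * ff t x) = integral UNIV (gg2 t) - t^4/1296 * integral UNIV (ff t)"
  proof -
    have i1: "gg2 t integrable_on UNIV" using gg2_int absolutely_integrable_on_def by blast
    have i2: "(\<lambda>x. t^4/1296 * ff t x) integrable_on UNIV"
      using ff_int absolutely_integrable_on_def integrable_on_cmult_left by blast
    show ?thesis using integral_diff[OF i1 i2] by simp
  qed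
  ultimately show ?thesis by simp
qed

lemma ode_unique:
  fixes D D1 p :: "real \<Rightarrow> real"
  assumes dD: "\<And>t. (D has_real_derivative D1 t) (at t)"
    and dD1: "\<And>t. (D1 has_real_derivative (p t * D t)) (at t)"
    and i0: "D 0 = 0" "D1 0 = 0"
    and pnn: "\<And>t. 0 \<le> p t" and pL: "\<And>t. 0 \<le> t \<Longrightarrow> t \<le> T \<Longrightarrow> p t \<le> L"
    and t: "0 \<le> t" "t \<le> T"
  shows "D t = 0"
proof -
  define Q where "Q s = (D s ^ 2 + D1 s ^ 2) * exp (- ((1 + L) * s))" for s
  have dQ: "(Q has_real_derivative
      ((2 * D s * D1 s + 2 * D1 s * (p s * D s)) * exp (- ((1 + L) * s))
       - (D s ^ 2 + D1 s ^ 2) * ((1 + L) * exp (- ((1 + L) * s))))) (at s)" for s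
    unfolding Q_def
    by (rule derivative_eq_intros dD dD1 refl | simp)+ (simp add: algebra_simps)
  have "Q t \<le> Q 0"
  proof (rule DERIV_nonpos_imp_nonincreasing[OF t(1)])
    fix s assume s: "0 \<le> s" "s \<le> t"
    have ps: "p s \<le> L" "0 \<le> p s" using pL[of s] s t pnn by auto
    have a: "2 * D s * D1 s * (1 + p s) \<le> (D s ^ 2 + D1 s ^ 2) * (1 + L)"
    proof -
      have "\<bar>2 * D s * D1 s\<bar> \<le> D s ^ 2 + D1 s ^ 2"
      proof -
        have "0 \<le> (\<bar>D s\<bar> - \<bar>D1 s\<bar>)^2" by simp
        then show ?thesis by (simp add: power2_diff abs_mult power2_abs)
      qed
      then have "2 * D s * D1 s * (1 + p s) \<le> (D s ^ 2 + D1 s ^ 2) * (1 + p s)"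
        using ps by (intro mult_right_mono) auto
      also have "\<dots> \<le> (D s ^ 2 + D1 s ^ 2) * (1 + L)"
        using ps by (intro mult_left_mono) auto
      finally show ?thesis .
    qed
    have "(2 * D s * D1 s + 2 * D1 s * (p s * D s)) * exp (- ((1 + L) * s))
       - (D s ^ 2 + D1 s ^ 2) * ((1 + L) * exp (- ((1 + L) * s)))
       = (2 * D s * D1 s * (1 + p s) - (D s ^ 2 + D1 s ^ 2) * (1 + L)) * exp (- ((1 + L) * s))"
      by (simp add: algebra_simps)
    also have "\<dots> \<le> 0" using a by (intro mult_nonpos_nonneg) auto
    finally show "\<exists>y. (Q has_real_derivative y) (at s) \<and> y \<le> 0" using dQ by blast
  qed
  moreover have "Q 0 = 0" unfolding Q_def using i0 by simp
  ultimately have "(D t ^ 2 + D1 t ^ 2) * exp (- ((1 + L) * t)) \<le> 0" unfolding Q_def by simp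
  then have "D t ^ 2 + D1 t ^ 2 \<le> 0" by (simp add: mult_le_0_iff)
  then have "D t ^ 2 \<le> 0" using zero_le_power2[of "D1 t"] by linarith
  then show ?thesis by simp
qed

lemma Gamma_refl_sixth: "Gamma (1/6::real) * Gamma (5/6) = 2 * pi"
proof -
  have e: "1 - complex_of_real (1/6) = complex_of_real (5/6)" by simp
  have s: "sin (complex_of_real pi * complex_of_real (1/6)) = complex_of_real (1/2)"
    unfolding of_real_mult[symmetric] sin_of_real by (simp add: sin_30)
  have "complex_of_real (Gamma (1/6)) * complex_of_real (Gamma (5/6)) = complex_of_real pi / complex_of_real (1/2)"
    using Gamma_reflection_complex[of "complex_of_real (1/6)"] unfolding e s Gamma_complex_of_real .
  then have "complex_of_real (Gamma (1/6) * Gamma (5/6)) = complex_of_real (pi / (1/2))"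
    by simp
  then show ?thesis unfolding of_real_eq_iff by simp
qed

lemma gamma6_half:
  fixes a :: nat
  shows "((\<lambda>x::real. x^a * exp (- (x^6))) has_integral (Gamma ((real a + 1)/6) / 6)) {0<..}"
proof -
  define c where "c = (real a + 1)/6"
  have c0: "c > 0" unfolding c_def by simp
  define f where "f u = u powr (c - 1) / exp u / 6" for u :: real
  have G: "((\<lambda>t. t powr (c - 1) / exp t) has_integral Gamma c) {0..}"
    by (rule Gamma_integral_real[OF c0])
  then have G': "((\<lambda>t. t powr (c - 1) / exp t) has_integral Gamma c) {0<..}"
    by (rule has_integral_spike_set_eq[THEN iffD1, rotated 2]) (auto intro: negligible_subset[of "{0}"])
  then have fi: "(f has_integral (Gamma c / 6)) {0<..}"
    unfolding f_def by (rule has_integral_divide)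
  have fa: "f absolutely_integrable_on {0<..}"
    by (rule nonnegative_absolutely_integrable_1) (use fi in \<open>auto simp: f_def has_integral_integrable\<close>)
  have img: "(\<lambda>x::real. x^6) ` {0<..} = {0<..}"
  proof
    show "(\<lambda>x::real. x^6) ` {0<..} \<subseteq> {0<..}" by auto
    show "{0<..} \<subseteq> (\<lambda>x::real. x^6) ` {0<..}"
    proof
      fix u :: real assume "u \<in> {0<..}"
      then have u: "u > 0" by simp
      have "(u powr (1/6)) ^ 6 = u" using u by (simp add: powr_realpow[symmetric] powr_powr)
      moreover have "u powr (1/6) > 0" using u by simp
      ultimately show "u \<in> (\<lambda>x::real. x^6) ` {0<..}" by (metis greaterThan_iff image_eqI)
    qed
  qed
  have inj: "inj_on (\<lambda>x::real. x^6) {0<..}"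
    by (rule inj_onI) (auto simp: power_eq_iff_eq_base)
  have der: "((\<lambda>x::real. x^6) has_field_derivative (6 * x^5)) (at x within {0<..})" for x
    by (auto intro!: derivative_eq_intros)
  have rhs: "f absolutely_integrable_on ((\<lambda>x::real. x^6) ` {0<..}) \<and>
        integral ((\<lambda>x::real. x^6) ` {0<..}) f = Gamma c / 6"
    unfolding img using fa fi by (simp add: integral_unique)
  have "(\<lambda>x::real. \<bar>6 * x^5\<bar> * f (x^6)) absolutely_integrable_on {0<..} \<and>
        integral {0<..} (\<lambda>x::real. \<bar>6 * x^5\<bar> * f (x^6)) = Gamma c / 6"
    by (rule has_absolute_integral_change_of_variables_1'[of "{0<..}" "\<lambda>x::real. x^6" "\<lambda>x. 6 * x^5" f "Gamma c / 6", THEN iffD2])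
       (use der inj rhs in auto)
  moreover have eq: "\<bar>6 * x^5\<bar> * f (x^6) = x^a * exp (- (x^6))" if "x > 0" for x :: real
  proof -
    have x6: "x^6 = x powr (real 6)" using powr_realpow[of x 6] that by simp
    have "(x^6) powr (c - 1) = x powr (6 * (c - 1))"
      unfolding x6 powr_powr by simp
    also have "6 * (c - 1) = real a - 5" unfolding c_def by simp
    finally have p: "(x^6) powr (c - 1) = x powr (real a - 5)" .
    have x5: "x^5 = x powr (real 5)" using powr_realpow[of x 5] that by simp
    have "x^5 * x powr (real a - 5) = x powr (real 5) * x powr (real a - 5)"
      unfolding x5 ..
    also have "\<dots> = x powr (real 5 + (real a - 5))" by (rule powr_add[symmetric])
    also have "\<dots> = x^a" using that powr_realpow[of x a] by simp
    finally have q: "x^5 * x powr (real a - 5) = x^a" .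
    show ?thesis using that q unfolding f_def p by (simp add: abs_mult exp_minus field_simps)
  qed
  ultimately have "(\<lambda>x::real. x^a * exp (- (x^6))) absolutely_integrable_on {0<..} \<and>
        integral {0<..} (\<lambda>x::real. x^a * exp (- (x^6))) = Gamma c / 6"
  proof -
    assume A: "(\<lambda>x::real. \<bar>6 * x^5\<bar> * f (x^6)) absolutely_integrable_on {0<..} \<and>
        integral {0<..} (\<lambda>x::real. \<bar>6 * x^5\<bar> * f (x^6)) = Gamma c / 6"
      and B: "\<And>x::real. x > 0 \<Longrightarrow> \<bar>6 * x^5\<bar> * f (x^6) = x^a * exp (- (x^6))"
    have "(\<lambda>x::real. x^a * exp (- (x^6))) absolutely_integrable_on {0<..}"
      by (rule absolutely_integrable_spike[OF conjunct1[OF A] negligible_empty]) (metis B DiffD1 greaterThan_iff)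
    moreover have "integral {0<..} (\<lambda>x::real. \<bar>6 * x^5\<bar> * f (x^6)) = integral {0<..} (\<lambda>x::real. x^a * exp (- (x^6)))"
      by (rule integral_cong) (metis B greaterThan_iff)
    ultimately show ?thesis using A by simp
  qed
  then show ?thesis unfolding c_def
    using absolutely_integrable_on_def has_integral_iff by blast
qed

lemma E0: "integral UNIV (ff 0) = Gamma (1/6) / 3"
proof -
  have "((\<lambda>x::real. x^0 * exp (- (x^6))) has_integral (2 * (Gamma ((real 0 + 1)/6) / 6))) UNIV"
    by (rule even_has_integral[OF _ _ gamma6_half]) auto
  moreover have "(\<lambda>x::real. x^0 * exp (- (x^6))) = ff 0" by (auto simp: ff_def)
  ultimately show ?thesis by (simp add: integral_unique)
qed

lemma E1_0: "integral UNIV (gg1 0) = Gamma (5/6) / 3"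
proof -
  have "((\<lambda>x::real. x^4 * exp (- (x^6))) has_integral (2 * (Gamma ((real 4 + 1)/6) / 6))) UNIV"
    by (rule even_has_integral[OF _ _ gamma6_half]) auto
  moreover have "(\<lambda>x::real. x^4 * exp (- (x^6))) = gg1 0" by (auto simp: ff_def gg1_def pp_def)
  ultimately show ?thesis by (simp add: integral_unique)
qed

lemma main_ode:
  assumes t: "t \<ge> 0"
  shows "integral UNIV (ff t) = pi / 9 * BB t"
proof -
  define D where "D s = integral UNIV (ff s) - pi/9 * BB s" for s
  define D1 where "D1 s = integral UNIV (gg1 s) - pi/9 * (\<Sum>n. diffs cc n * s^n)" for s
  have dD: "(D has_real_derivative D1 s) (at s)" for s
    unfolding D_def D1_def by (intro DERIV_diff DERIV_cmult E_deriv BB_deriv)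
  have dD1: "(D1 has_real_derivative (s^4/1296 * D s)) (at s)" for s
  proof -
    have "(D1 has_real_derivative (integral UNIV (gg2 s) - pi/9 * (\<Sum>n. diffs (diffs cc) n * s^n))) (at s)"
      unfolding D1_def by (intro DERIV_diff DERIV_cmult E1_deriv BB1_deriv)
    moreover have "integral UNIV (gg2 s) - pi/9 * (\<Sum>n. diffs (diffs cc) n * s^n) = s^4/1296 * D s"
      unfolding E2_eq BB2_eq D_def by (simp add: algebra_simps)
    ultimately show ?thesis by (simp only:)
  qed
  have G: "Gamma (1/6::real) * Gamma (5/6) = 2 * pi" by (rule Gamma_refl_sixth)
  have g1: "Gamma (1/6::real) > 0" "Gamma (5/6::real) > 0" by auto
  have alg0: "a/3 - pi/9 * (6 * inverse b) = 0" if "a*b = 2*pi" "b > 0" for a b :: real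
    using that by (simp add: field_simps)
  have alg1: "b/3 - pi/9 * (6 * inverse a) = 0" if "a*b = 2*pi" "a > 0" for a b :: real
    using that by (simp add: field_simps)
  have D0: "D 0 = 0"
    unfolding D_def E0 BB_0 rGamma_inverse_Gamma using alg0[OF G g1(2)] by simp
  have r7: "rGamma (7/6::real) = 6 * rGamma (1/6)"
  proof -
    have "(1/6) * rGamma (1/6 + 1) = rGamma (1/6::real)" by (rule rGamma_plus1)
    moreover have "(1/6 + 1::real) = 7/6" by simp
    ultimately show ?thesis by simp
  qed
  have D10: "D1 0 = 0"
    unfolding D1_def E1_0 BB1_0 unfolding r7 unfolding rGamma_inverse_Gamma using alg1[OF G g1(1)] by simp
  have "D t = 0"
  proof (rule ode_unique[OF dD dD1 D0 D10, where T = t and L = "t^4/1296"])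
    show "0 \<le> s^4/1296" for s :: real by (simp add: zero_le_even_power)
    show "s^4/1296 \<le> t^4/1296" if "0 \<le> s" "s \<le> t" for s
      using power_mono[OF that(2) that(1), of 4] by simp
  qed (use t in auto)
  then show ?thesis unfolding D_def by simp
qed

theorem lemma6p1:
  fixes \<tau> :: real
  assumes "\<tau> > 0"
  defines "C \<equiv> pi * sqrt (6 * \<tau>) / 9 *
      (besselI (1/6) (\<tau>^3 / 108) + besselI (-1/6) (\<tau>^3 / 108)) * exp (- (\<tau>^3 / 108))"
  shows "((\<lambda>x::real. exp (- (x^6 - \<tau> * x^4 + \<tau>^2 * x^2 / 4))) has_integral C) UNIV \<and>
         ((\<lambda>s::real. s powr (-1/2) * exp (- (s * (s - \<tau> / 2)^2))) has_integral C) {0<..}"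
proof -
  have t: "\<tau> > 0" by fact
  define h where "h x = exp (- (x^6 - \<tau> * x^4 + \<tau>^2 * x^2 / 4))" for x :: real
  have BBt: "BB \<tau> = sqrt (6*\<tau>) * (besselI (1/6) (\<tau>^3 / 108) + besselI (-1/6) (\<tau>^3 / 108))"
    unfolding BB_eq bessel_S0[OF t, symmetric] bessel_S1[OF t, symmetric] by (simp add: algebra_simps)
  have CE: "C = integral UNIV (ff \<tau>) * exp (- (\<tau>^3 / 108))"
    unfolding C_def main_ode[OF less_imp_le[OF t]] BBt by (simp add: algebra_simps)
  have ffi: "(ff \<tau> has_integral integral UNIV (ff \<tau>)) UNIV"
    using ff_int absolutely_integrable_on_def has_integral_iff by blast
  have hff: "h x = ff \<tau> x * exp (- (\<tau>^3 / 108))" for x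
    unfolding h_def ff_def by (simp add: exp_add[symmetric] algebra_simps)
  have part1: "(h has_integral C) UNIV"
    unfolding CE hff by (rule has_integral_mult_left[OF ffi])
  have hev: "h (-x) = h x" for x unfolding h_def by simp
  have hnn: "h x \<ge> 0" for x unfolding h_def by simp
  have half: "(h has_integral (C/2)) {0<..}" by (rule even_has_integral_half[OF hev hnn part1])
  have two: "((\<lambda>x. 2 * h x) has_integral C) {0<..}"
    using has_integral_mult_right[OF half, of 2] by simp
  have twoa: "(\<lambda>x. 2 * h x) absolutely_integrable_on {0<..}"
    by (rule nonnegative_absolutely_integrable_1) (use two hnn in \<open>auto simp: has_integral_integrable\<close>)
  define F where "F s = s powr (-1/2) * exp (- (s * (s - \<tau> / 2)^2))" for s :: real
  have eq: "\<bar>2 * x\<bar> * F (x^2) = 2 * h x" if "x > 0" for x :: real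
  proof -
    have x2: "x^2 = x powr (real 2)" using powr_realpow[of x 2] that by simp
    have "(x^2) powr (-1/2) = x powr (real 2 * (-1/2))" unfolding x2 powr_powr ..
    also have "\<dots> = inverse x" using that by (simp add: powr_minus)
    finally have p: "(x^2) powr (-1/2) = inverse x" .
    have e: "x^2 * (x^2 - \<tau>/2)^2 = x^6 - \<tau> * x^4 + \<tau>^2 * x^2 / 4"
      by (simp add: field_simps eval_nat_numeral)
    show ?thesis unfolding F_def h_def p e using that by (simp add: field_simps)
  qed
  have A: "(\<lambda>x::real. \<bar>2 * x\<bar> * F (x^2)) absolutely_integrable_on {0<..} \<and>
        integral {0<..} (\<lambda>x::real. \<bar>2 * x\<bar> * F (x^2)) = C"
  proof
    show "(\<lambda>x::real. \<bar>2 * x\<bar> * F (x^2)) absolutely_integrable_on {0<..}"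
      by (rule absolutely_integrable_spike[OF twoa negligible_empty]) (metis eq DiffD1 greaterThan_iff)
    have e1: "integral {0<..} (\<lambda>x::real. \<bar>2 * x\<bar> * F (x^2)) = integral {0<..} (\<lambda>x. 2 * h x)"
      by (rule integral_cong) (metis eq greaterThan_iff)
    have e2: "integral {0<..} (\<lambda>x. 2 * h x) = C" by (rule integral_unique[OF two])
    show "integral {0<..} (\<lambda>x::real. \<bar>2 * x\<bar> * F (x^2)) = C"
      using e1 e2 by (simp only:)
  qed
  have img: "(\<lambda>x::real. x^2) ` {0<..} = {0<..}"
  proof
    show "(\<lambda>x::real. x^2) ` {0<..} \<subseteq> {0<..}" by auto
    show "{0<..} \<subseteq> (\<lambda>x::real. x^2) ` {0<..}"
    proof
      fix u :: real assume "u \<in> {0<..}"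
      then have u: "u > 0" by simp
      have "(sqrt u)^2 = u" using u by simp
      moreover have "sqrt u > 0" using u by simp
      ultimately show "u \<in> (\<lambda>x::real. x^2) ` {0<..}" by (metis greaterThan_iff image_eqI)
    qed
  qed
  have inj: "inj_on (\<lambda>x::real. x^2) {0<..}"
    by (rule inj_onI) (auto simp: power2_eq_iff)
  have der: "((\<lambda>x::real. x^2) has_field_derivative (2 * x)) (at x within {0<..})" for x
    by (auto intro!: derivative_eq_intros)
  have R: "F absolutely_integrable_on ((\<lambda>x::real. x^2) ` {0<..}) \<and>
        integral ((\<lambda>x::real. x^2) ` {0<..}) F = C"
    by (rule has_absolute_integral_change_of_variables_1'[of "{0<..}" "\<lambda>x::real. x^2" "\<lambda>x. 2 * x" F C, THEN iffD1])
       (use der inj A in auto)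
  then have part2: "(F has_integral C) {0<..}"
    unfolding img using absolutely_integrable_on_def has_integral_iff by blast
  show ?thesis using part1 part2 unfolding h_def F_def by blast
qed

end
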